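(* Let $I$ be a resident-minimal and hospital-complete instance and $J$ a simple extension of $I$. Let $P=\mathrm{prop}(J)\setminus\mathrm{prop}(I)$ and $X=\mathrm{rej}(J)\setminus\mathrm{rej}(I)$. Then: (P1) $P\cap\mathrm{prop}(I)=\emptyset$; (P2) for each $r\in R$ there is at most one $h\in H$ with $(r,h)\in P$; (P3) $X\subseteq\mathrm{tent}(I)$; (P4) $\mathrm{res}\,P\cap\mathrm{res}\,\mathrm{tent}(I)\subseteq\mathrm{res}\,X$; (P5) for each $h\in H$, $|\mathrm{res}_h(P\cup(\mathrm{tent}(I)\setminus X))|\le q_h$, and if $\mathrm{res}_h X$ is non-empty then $|\mathrm{res}_h(P\cup(\mathrm{tent}(I)\setminus X))|=q_h$; (P6) for each $h\in H$, each member of $\mathrm{res}_h(P\cup(\mathrm{tent}(I)\setminus X))$ precedes all members of $\mathrm{res}_h X$ in the preference list of $h$ in $I$.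
   Context: An instance $I$ consists of finite disjoint sets $R$ (residents) and $H$ (hospitals), a positive integer quota $q_h$ for each $h\in H$, for each $r\in R$ a preference list of $r$ (a sequence of distinct members of $H$, not necessarily all), and for each $h\in H$ a preference list of $h$ (a sequence of distinct members of $R$). A list is complete if it contains every member of the opposite side; an instance is hospital-complete if every hospital's list is complete. A match is a pair $(r,h)\in R\times H$. For a set $M$ of matches, $\mathrm{res}_h M=\{r:(r,h)\in M\}$, $\mathrm{res}\,M=\{r:(r,h)\in M\text{ for some }h\}$. $J$ is an extension of $I$ (same $R,H$, quotas) if every list of $J$ has the corresponding list of $I$ as a prefix. An event is $(r,h)^+$ (proposal) or $(r,h)^-$ (rejection). For an event sequence $\sigma$, $\mathrm{prop}(\sigma)$, $\mathrm{rej}(\sigma)$ are the sets of matches proposed/rejected in $\sigma$ and $\mathrm{tent}(\sigma)=\mathrm{prop}(\sigma)\setminus\mathrm{rej}(\sigma)$. A match $(r,h)\in M$ is ousted from $M$ in $I$ if the list of $h$ in $I$ contains at least $q_h$ residents of $\mathrm{res}_h M$ and either $r$ is not on it or $r$ is preceded on it by at least $q_h$ residents of $\mathrm{res}_h M$. $I$-feasible sequences: the empty sequence is $I$-feasible; if $\sigma$ is $I$-feasible then $\sigma+(r,h)^+$ is $I$-feasible if $r\notin\mathrm{res}\,\mathrm{tent}(\sigma)$, $(r,h)\notin\mathrm{prop}(\sigma)$, $h$ is on the list of $r$ in $I$ and $(r,h')\in\mathrm{rej}(\sigma)$ for every $h'$ preceding $h$ on it; and $\sigma+(r,h)^-$ is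 $I$-feasible if $(r,h)$ is ousted from $\mathrm{prop}(\sigma)$ in $I$ and $(r,h)\notin\mathrm{rej}(\sigma)$. All maximal $I$-feasible sequences contain the same events; $\mathrm{prop}(I),\mathrm{rej}(I),\mathrm{tent}(I)$ denote $\mathrm{prop}(\sigma),\mathrm{rej}(\sigma),\mathrm{tent}(\sigma)$ for any maximal $I$-feasible $\sigma$. $I$ is resident-minimal if $\mathrm{prop}(I)$ equals the set of matches $(r,h)$ with $h$ on the list of $r$ in $I$. An extension $J$ of $I$ is simple if $(\mathrm{prop}(J)\setminus\mathrm{prop}(I))\cap(\mathrm{rej}(J)\setminus\mathrm{rej}(I))=\emptyset$. *)

theory Defs
  imports Main "HOL-Library.Sublist"
begin

record ('r,'h) inst =
  Res :: "'r set"
  Hos :: "'h set"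
  quota :: "'h \<Rightarrow> nat"
  rlist :: "'r \<Rightarrow> 'h list"
  hlist :: "'h \<Rightarrow> 'r list"

definition wf_inst :: "('r,'h) inst \<Rightarrow> bool" where
  "wf_inst I \<longleftrightarrow> finite (Res I) \<and> finite (Hos I)
     \<and> (\<forall>h\<in>Hos I. quota I h > 0)
     \<and> (\<forall>r\<in>Res I. distinct (rlist I r) \<and> set (rlist I r) \<subseteq> Hos I)
     \<and> (\<forall>h\<in>Hos I. distinct (hlist I h) \<and> set (hlist I h) \<subseteq> Res I)"

definition precedes :: "'a list \<Rightarrow> 'a \<Rightarrow> 'a \<Rightarrow> bool" where
  "precedes xs a b \<longleftrightarrow> (\<exists>i j. i < j \<and> j < length xs \<and> xs ! i = a \<and> xs ! j = b)"

definition hospital_complete :: "('r,'h) inst \<Rightarrow> bool" where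
  "hospital_complete I \<longleftrightarrow> (\<forall>h\<in>Hos I. set (hlist I h) = Res I)"

definition res_h :: "('r \<times> 'h) set \<Rightarrow> 'h \<Rightarrow> 'r set" where
  "res_h M h = {r. (r,h) \<in> M}"

definition res :: "('r \<times> 'h) set \<Rightarrow> 'r set" where
  "res M = {r. \<exists>h. (r,h) \<in> M}"

definition is_extension :: "('r,'h) inst \<Rightarrow> ('r,'h) inst \<Rightarrow> bool" where
  "is_extension J I \<longleftrightarrow> Res J = Res I \<and> Hos J = Hos I \<and> quota J = quota I
     \<and> (\<forall>r\<in>Res I. prefix (rlist I r) (rlist J r))
     \<and> (\<forall>h\<in>Hos I. prefix (hlist I h) (hlist J h))"

datatype ('r,'h) event = PropE 'r 'h | RejE 'r 'h

definition props :: "('r,'h) event list \<Rightarrow> ('r \<times> 'h) set" where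
  "props \<sigma> = {(r,h). PropE r h \<in> set \<sigma>}"

definition rejs :: "('r,'h) event list \<Rightarrow> ('r \<times> 'h) set" where
  "rejs \<sigma> = {(r,h). RejE r h \<in> set \<sigma>}"

definition tents :: "('r,'h) event list \<Rightarrow> ('r \<times> 'h) set" where
  "tents \<sigma> = props \<sigma> - rejs \<sigma>"

definition ousted :: "('r,'h) inst \<Rightarrow> ('r \<times> 'h) set \<Rightarrow> 'r \<Rightarrow> 'h \<Rightarrow> bool" where
  "ousted I M r h \<longleftrightarrow> (r,h) \<in> M
     \<and> card (set (hlist I h) \<inter> res_h M h) \<ge> quota I h
     \<and> (r \<notin> set (hlist I h)
        \<or> card (set (takeWhile (\<lambda>x. x \<noteq> r) (hlist I h)) \<inter> res_h M h) \<ge> quota I h)"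

inductive feasible :: "('r,'h) inst \<Rightarrow> ('r,'h) event list \<Rightarrow> bool" for I where
  feas_Nil: "feasible I []"
| feas_Prop: "\<lbrakk> feasible I \<sigma>; r \<in> Res I; h \<in> Hos I; r \<notin> res (tents \<sigma>); (r,h) \<notin> props \<sigma>;
     h \<in> set (rlist I r); \<forall>h'. precedes (rlist I r) h' h \<longrightarrow> (r,h') \<in> rejs \<sigma> \<rbrakk>
     \<Longrightarrow> feasible I (\<sigma> @ [PropE r h])"
| feas_Rej: "\<lbrakk> feasible I \<sigma>; ousted I (props \<sigma>) r h; (r,h) \<notin> rejs \<sigma> \<rbrakk>
     \<Longrightarrow> feasible I (\<sigma> @ [RejE r h])"

definition maximal_feasible :: "('r,'h) inst \<Rightarrow> ('r,'h) event list \<Rightarrow> bool" where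
  "maximal_feasible I \<sigma> \<longleftrightarrow> feasible I \<sigma> \<and> \<not> (\<exists>e. feasible I (\<sigma> @ [e]))"

definition propI :: "('r,'h) inst \<Rightarrow> ('r \<times> 'h) set" where
  "propI I = props (SOME \<sigma>. maximal_feasible I \<sigma>)"

definition rejI :: "('r,'h) inst \<Rightarrow> ('r \<times> 'h) set" where
  "rejI I = rejs (SOME \<sigma>. maximal_feasible I \<sigma>)"

definition tentI :: "('r,'h) inst \<Rightarrow> ('r \<times> 'h) set" where
  "tentI I = tents (SOME \<sigma>. maximal_feasible I \<sigma>)"

definition resident_minimal :: "('r,'h) inst \<Rightarrow> bool" where
  "resident_minimal I \<longleftrightarrow> propI I = {(r,h). r \<in> Res I \<and> h \<in> set (rlist I r)}"

definition simple_extension :: "('r,'h) inst \<Rightarrow> ('r,'h) inst \<Rightarrow> bool" where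
  "simple_extension J I \<longleftrightarrow> is_extension J I
     \<and> (propI J - propI I) \<inter> (rejI J - rejI I) = {}"

end

theory Submission
  imports Defs "HOL-Library.Sublist"
begin

lemma props_app[simp]: "props (s @ [PropE r h]) = insert (r,h) (props s)"
  "props (s @ [RejE r h]) = props s"
  "props [] = {}"
  by (auto simp: props_def)
lemma rejs_app[simp]: "rejs (s @ [PropE r h]) = rejs s"
  "rejs (s @ [RejE r h]) = insert (r,h) (rejs s)"
  "rejs [] = {}"
  by (auto simp: rejs_def)

lemma ousted_mono:
  assumes "ousted K M r h" "M \<subseteq> M'"
  shows "ousted K M' r h"
proof -
  have f: "finite (set xs \<inter> res_h M' h)" for xs :: "'a list" by simp
  have s: "set xs \<inter> res_h M h \<subseteq> set xs \<inter> res_h M' h" for xs :: "'a list"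
    using assms(2) by (auto simp: res_h_def)
  have "card (set xs \<inter> res_h M h) \<le> card (set xs \<inter> res_h M' h)" for xs :: "'a list"
    by (rule card_mono[OF f s])
  then show ?thesis using assms unfolding ousted_def by (meson le_trans subsetD)
qed

definition inv :: "('r,'h) inst \<Rightarrow> ('r,'h) event list \<Rightarrow> bool" where
  "inv K s \<longleftrightarrow> distinct s \<and> rejs s \<subseteq> props s
    \<and> (\<forall>(r,h)\<in>props s. r \<in> Res K \<and> h \<in> Hos K \<and> h \<in> set (rlist K r)
         \<and> (\<forall>h'. precedes (rlist K r) h' h \<longrightarrow> (r,h') \<in> rejs s))
    \<and> (\<forall>(r,h)\<in>rejs s. ousted K (props s) r h)"

lemma feasible_inv: "feasible K s \<Longrightarrow> inv K s"
proof (induction rule: feasible.induct)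
  case feas_Nil
  then show ?case by (simp add: inv_def)
next
  case (feas_Prop \<sigma> r h)
  have "PropE r h \<notin> set \<sigma>" using feas_Prop.hyps(5) by (auto simp: props_def)
  moreover have "ousted K (insert (r,h) (props \<sigma>)) r' h'" if "(r',h') \<in> rejs \<sigma>" for r' h'
  proof -
    have "ousted K (props \<sigma>) r' h'" using feas_Prop.IH that by (auto simp: inv_def)
    then show ?thesis by (rule ousted_mono) auto
  qed
  ultimately show ?case using feas_Prop by (auto simp: inv_def)
next
  case (feas_Rej \<sigma> r h)
  have "RejE r h \<notin> set \<sigma>" using feas_Rej.hyps(3) by (auto simp: rejs_def)
  moreover have "(r,h) \<in> props \<sigma>" using feas_Rej.hyps(2) by (simp add: ousted_def)
  ultimately show ?case using feas_Rej by (auto simp: inv_def)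
qed

lemma inv_set:
  assumes "inv K s"
  shows "set s \<subseteq> (\<lambda>(r,h). PropE r h) ` (Res K \<times> Hos K) \<union> (\<lambda>(r,h). RejE r h) ` (Res K \<times> Hos K)"
proof
  fix e assume e: "e \<in> set s"
  show "e \<in> (\<lambda>(r,h). PropE r h) ` (Res K \<times> Hos K) \<union> (\<lambda>(r,h). RejE r h) ` (Res K \<times> Hos K)"
  proof (cases e)
    case (PropE r h)
    then have "(r,h) \<in> props s" using e by (auto simp: props_def)
    then show ?thesis using assms PropE by (auto simp: inv_def)
  next
    case (RejE r h)
    then have "(r,h) \<in> rejs s" using e by (auto simp: rejs_def)
    then have "(r,h) \<in> props s" using assms by (auto simp: inv_def)
    then show ?thesis using assms RejE by (auto simp: inv_def)
  qed
qed

lemma exists_max: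
  assumes "finite (Res K)" "finite (Hos K)"
  shows "\<exists>t. maximal_feasible K t"
proof -
  define E where "E = (\<lambda>(r,h). PropE r h) ` (Res K \<times> Hos K) \<union> (\<lambda>(r,h). RejE r h) ` (Res K \<times> Hos K)"
  have fE: "finite E" using assms by (simp add: E_def)
  have len: "length s \<le> card E" if "feasible K s" for s
  proof -
    have i: "inv K s" using feasible_inv[OF that] .
    then have "distinct s" by (simp add: inv_def)
    then have "length s = card (set s)" by (simp add: distinct_card)
    also have "\<dots> \<le> card E" using inv_set[OF i] fE by (simp add: E_def card_mono)
    finally show ?thesis .
  qed
  have "\<forall>s. feasible K s \<longrightarrow> card E - length s = n \<longrightarrow> (\<exists>t. maximal_feasible K t)" for n
  proof (induction n rule: less_induct)
    case (less n)
    show ?case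
    proof (intro allI impI)
      fix s assume f: "feasible K s" and n: "card E - length s = n"
      show "\<exists>t. maximal_feasible K t"
      proof (cases "\<exists>e. feasible K (s @ [e])")
        case True
        then obtain e where fe: "feasible K (s @ [e])" by blast
        have "length (s @ [e]) \<le> card E" using len[OF fe] .
        then have "card E - length (s @ [e]) < n" using n by simp
        then show ?thesis using less fe by blast
      next
        case False
        then show ?thesis using f by (auto simp: maximal_feasible_def)
      qed
    qed
  qed
  then show ?thesis using feasible.feas_Nil by blast
qed

lemma max_some: "finite (Res K) \<Longrightarrow> finite (Hos K) \<Longrightarrow> maximal_feasible K (SOME t. maximal_feasible K t)"
  using exists_max someI_ex by metis

lemma precedes_total:
  assumes "a \<in> set xs" "b \<in> set xs" "a \<noteq> b"
  shows "precedes xs a b \<or> precedes xs b a"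
proof -
  obtain i where i: "i < length xs" "xs ! i = a" using assms(1) by (auto simp: in_set_conv_nth)
  obtain j where j: "j < length xs" "xs ! j = b" using assms(2) by (auto simp: in_set_conv_nth)
  have "i \<noteq> j" using i j assms(3) by auto
  then show ?thesis unfolding precedes_def using i j
    by (metis linorder_neqE_nat)
qed

lemma dominate:
  assumes "feasible K s" "maximal_feasible K t"
  shows "props s \<subseteq> props t \<and> rejs s \<subseteq> rejs t"
  using assms(1)
proof (induction rule: feasible.induct)
  case feas_Nil
  then show ?case by simp
next
  case (feas_Prop \<sigma> r h)
  have ft: "feasible K t" and nm: "\<And>e. \<not> feasible K (t @ [e])"
    using assms(2) by (auto simp: maximal_feasible_def)
  have it: "inv K t" using feasible_inv[OF ft] .
  have "(r,h) \<in> props t"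
  proof (rule ccontr)
    assume np: "(r,h) \<notin> props t"
    have pre: "\<forall>h'. precedes (rlist K r) h' h \<longrightarrow> (r,h') \<in> rejs t"
      using feas_Prop by blast
    have "r \<notin> res (tents t)"
    proof
      assume "r \<in> res (tents t)"
      then obtain h'' where h'': "(r,h'') \<in> props t" "(r,h'') \<notin> rejs t"
        by (auto simp: res_def tents_def)
      have hin: "h'' \<in> set (rlist K r)" and pre2: "\<forall>h'. precedes (rlist K r) h' h'' \<longrightarrow> (r,h') \<in> rejs t"
        using it h''(1) by (auto simp: inv_def)
      have "h'' \<noteq> h" using np h'' by auto
      then have "precedes (rlist K r) h'' h \<or> precedes (rlist K r) h h''"
        using precedes_total hin feas_Prop.hyps(6) by metis
      then show False
        using pre pre2 h'' np it by (auto simp: inv_def)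
    qed
    then have "feasible K (t @ [PropE r h])"
      using feasible.feas_Prop[OF ft] feas_Prop.hyps np pre by blast
    then show False using nm by blast
  qed
  then show ?case using feas_Prop.IH by simp
next
  case (feas_Rej \<sigma> r h)
  have ft: "feasible K t" and nm: "\<And>e. \<not> feasible K (t @ [e])"
    using assms(2) by (auto simp: maximal_feasible_def)
  have o: "ousted K (props t) r h"
    using ousted_mono[OF feas_Rej.hyps(2)] feas_Rej.IH by blast
  have "(r,h) \<in> rejs t"
  proof (rule ccontr)
    assume "(r,h) \<notin> rejs t"
    then have "feasible K (t @ [RejE r h])" using feasible.feas_Rej[OF ft o] by blast
    then show False using nm by blast
  qed
  then show ?case using feas_Rej.IH by simp
qed

lemma precedes_prefix:
  assumes "prefix ys xs" "distinct xs" "precedes xs a b" "b \<in> set ys"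
  shows "precedes ys a b"
proof -
  obtain zs where xs: "xs = ys @ zs" using assms(1) by (auto simp: prefix_def)
  obtain i j where ij: "i < j" "j < length xs" "xs ! i = a" "xs ! j = b"
    using assms(3) by (auto simp: precedes_def)
  obtain k where k: "k < length ys" "ys ! k = b" using assms(4) by (auto simp: in_set_conv_nth)
  have "xs ! k = b" using k xs by (simp add: nth_append)
  then have "k = j" using assms(2) ij k xs nth_eq_iff_index_eq by (metis trans_less_add1 length_append)
  then show ?thesis using ij k xs unfolding precedes_def
    by (metis nth_append order.strict_trans)
qed

lemma takeWhile_app_sub: "set (takeWhile P xs) \<subseteq> set (takeWhile P (xs @ zs))"
  by (induction xs) auto

lemma ousted_ext:
  assumes "ousted I M r h" "prefix (hlist I h) (hlist J h)" "quota J = quota I"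
  shows "ousted J M r h"
proof -
  obtain zs where xs: "hlist J h = hlist I h @ zs" using assms(2) by (auto simp: prefix_def)
  have c1: "card (set (hlist I h) \<inter> res_h M h) \<le> card (set (hlist J h) \<inter> res_h M h)"
    by (rule card_mono) (auto simp: xs)
  have c2: "card (set (takeWhile (\<lambda>x. x \<noteq> r) (hlist I h)) \<inter> res_h M h)
        \<le> card (set (takeWhile (\<lambda>x. x \<noteq> r) (hlist J h)) \<inter> res_h M h)"
  proof (rule card_mono)
    show "set (takeWhile (\<lambda>x. x \<noteq> r) (hlist I h)) \<inter> res_h M h
      \<subseteq> set (takeWhile (\<lambda>x. x \<noteq> r) (hlist J h)) \<inter> res_h M h"
      unfolding xs by (intro Int_mono takeWhile_app_sub subset_refl)
  qed simp
  have c3: "card (set (hlist I h) \<inter> res_h M h) \<le> card (set (takeWhile (\<lambda>x. x \<noteq> r) (hlist J h)) \<inter> res_h M h)"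
    if "r \<notin> set (hlist I h)"
  proof -
    have "takeWhile (\<lambda>x. x \<noteq> r) (hlist I h @ zs) = hlist I h @ takeWhile (\<lambda>x. x \<noteq> r) zs"
      by (rule takeWhile_append2) (use that in auto)
    then show ?thesis by (intro card_mono) (auto simp: xs)
  qed
  show ?thesis
  proof -
    have a: "(r,h) \<in> M" "card (set (hlist I h) \<inter> res_h M h) \<ge> quota I h"
      "r \<notin> set (hlist I h) \<or> card (set (takeWhile (\<lambda>x. x \<noteq> r) (hlist I h)) \<inter> res_h M h) \<ge> quota I h"
      using assms(1) unfolding ousted_def by auto
    have "r \<notin> set (hlist J h) \<or> card (set (takeWhile (\<lambda>x. x \<noteq> r) (hlist J h)) \<inter> res_h M h) \<ge> quota I h"
      using a(2,3) c2 c3 by (meson le_trans)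
    then show ?thesis unfolding ousted_def using a c1 assms(3) by auto
  qed
qed

lemma feasible_ext:
  assumes "feasible I s" "is_extension J I" "wf_inst J"
  shows "feasible J s"
  using assms(1)
proof (induction rule: feasible.induct)
  case feas_Nil
  then show ?case by (rule feasible.feas_Nil)
next
  case (feas_Prop \<sigma> r h)
  have ext: "Res J = Res I" "Hos J = Hos I" "prefix (rlist I r) (rlist J r)"
    using assms(2) feas_Prop.hyps(2) by (auto simp: is_extension_def)
  have d: "distinct (rlist J r)" using assms(3) feas_Prop.hyps(2) ext by (auto simp: wf_inst_def)
  have "h \<in> set (rlist J r)" using ext(3) feas_Prop.hyps(6) set_mono_prefix by blast
  moreover have "\<forall>h'. precedes (rlist J r) h' h \<longrightarrow> (r,h') \<in> rejs \<sigma>"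
    using precedes_prefix[OF ext(3) d] feas_Prop.hyps(6,7) by blast
  ultimately show ?case using feasible.feas_Prop[OF feas_Prop.IH, of r h] feas_Prop.hyps(2-5) ext(1,2) by simp
next
  case (feas_Rej \<sigma> r h)
  have "(r,h) \<in> props \<sigma>" using feas_Rej.hyps(2) by (simp add: ousted_def)
  then have "h \<in> Hos I" using feasible_inv[OF feas_Rej.hyps(1)] by (auto simp: inv_def)
  then have "ousted J (props \<sigma>) r h"
    using assms(2) ousted_ext[OF feas_Rej.hyps(2)] by (auto simp: is_extension_def)
  then show ?case using feasible.feas_Rej[OF feas_Rej.IH] feas_Rej.hyps(3) by blast
qed

lemma filter_takeWhile_ne: "P r \<Longrightarrow> filter P (takeWhile (\<lambda>x. x \<noteq> r) xs) = takeWhile (\<lambda>x. x \<noteq> r) (filter P xs)"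
  by (induction xs) auto
lemma tw_sub: "r \<notin> set (takeWhile (\<lambda>x. x \<noteq> r') xs) \<Longrightarrow>
   set (takeWhile (\<lambda>x. x \<noteq> r') xs) \<subseteq> set (takeWhile (\<lambda>x. x \<noteq> r) xs)"
  by (induction xs) auto
lemma distinct_takeWhile': "distinct xs \<Longrightarrow> distinct (takeWhile P xs)"
  by (metis distinct_append takeWhile_dropWhile_id)
lemma tw_take: "distinct ys \<Longrightarrow> {r \<in> set ys. length (takeWhile (\<lambda>x. x \<noteq> r) ys) < q} = set (take q ys)"
proof (induction ys arbitrary: q)
  case Nil
  then show ?case by simp
next
  case (Cons a ys)
  show ?case
  proof (cases q)
    case 0
    then show ?thesis by auto
  next
    case (Suc q')
    have "{r \<in> set ys. length (takeWhile (\<lambda>x. x \<noteq> r) ys) < q'} = set (take q' ys)"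
      using Cons by simp
    then show ?thesis using Cons.prems Suc by auto
  qed
qed


lemma card_first_q:
  assumes "distinct xs" "S \<subseteq> set xs" "q \<le> card S"
  shows "card {r\<in>S. card (set (takeWhile (\<lambda>x. x \<noteq> r) xs) \<inter> S) < q} = q"
proof -
  define ys where "ys = filter (\<lambda>x. x \<in> S) xs"
  have sy: "set ys = S" using assms(2) by (auto simp: ys_def)
  have dy: "distinct ys" using assms(1) by (simp add: ys_def)
  have ly: "length ys = card S" using sy dy distinct_card by metis
  have e: "card (set (takeWhile (\<lambda>x. x \<noteq> r) xs) \<inter> S) = length (takeWhile (\<lambda>x. x \<noteq> r) ys)"
    if "r \<in> S" for r
  proof -
    have "set (takeWhile (\<lambda>x. x \<noteq> r) xs) \<inter> S = set (filter (\<lambda>x. x \<in> S) (takeWhile (\<lambda>x. x \<noteq> r) xs))"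
      by auto
    also have "\<dots> = set (takeWhile (\<lambda>x. x \<noteq> r) ys)"
      unfolding ys_def using filter_takeWhile_ne[of "\<lambda>x. x \<in> S" r] that by simp
    finally show ?thesis using distinct_card[OF distinct_takeWhile'[OF dy]] by simp
  qed
  have "{r\<in>S. card (set (takeWhile (\<lambda>x. x \<noteq> r) xs) \<inter> S) < q}
      = {r \<in> set ys. length (takeWhile (\<lambda>x. x \<noteq> r) ys) < q}"
    using e sy by auto
  also have "\<dots> = set (take q ys)" using tw_take[OF dy] .
  finally show ?thesis using distinct_card[of "take q ys"] dy ly assms(3) by simp
qed


lemma tw_precedes:
  assumes "a \<in> set (takeWhile (\<lambda>x. x \<noteq> b) xs)" "b \<in> set xs"
  shows "precedes xs a b"
proof -
  define t where "t = takeWhile (\<lambda>x. x \<noteq> b) xs"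
  define d where "d = dropWhile (\<lambda>x. x \<noteq> b) xs"
  have xs: "xs = t @ d" by (simp add: t_def d_def)
  have nb: "b \<notin> set t" unfolding t_def using set_takeWhileD by fastforce
  have "d \<noteq> []"
  proof
    assume "d = []"
    then have "b \<in> set t" using xs assms(2) by simp
    then show False using nb by simp
  qed
  have "hd d = b" unfolding d_def
    using hd_dropWhile[of "\<lambda>x. x \<noteq> b" xs] \<open>d \<noteq> []\<close> d_def by simp
  then have hd: "d ! 0 = b" using \<open>d \<noteq> []\<close> by (simp add: hd_conv_nth)
  obtain i where i: "i < length t" "t ! i = a" using assms(1) by (auto simp: t_def in_set_conv_nth)
  have "xs ! i = a" using i xs by (simp add: nth_append)
  moreover have "xs ! length t = b" using hd xs by (simp add: nth_append)
  moreover have "length t < length xs" using xs \<open>d \<noteq> []\<close> by simp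
  ultimately show ?thesis unfolding precedes_def using i by blast
qed

lemma max_rej:
  assumes "maximal_feasible K t" "ousted K (props t) r h"
  shows "(r,h) \<in> rejs t"
proof (rule ccontr)
  assume "(r,h) \<notin> rejs t"
  then have "feasible K (t @ [RejE r h])"
    using feasible.feas_Rej[OF _ assms(2)] assms(1) by (auto simp: maximal_feasible_def)
  then show False using assms(1) by (auto simp: maximal_feasible_def)
qed

lemma hosp_facts:
  assumes mx: "maximal_feasible K t" and d: "distinct (hlist K h)"
    and sub: "res_h (props t) h \<subseteq> set (hlist K h)"
  shows "card (res_h (tents t) h) \<le> quota K h"
    and "res_h (rejs t) h \<noteq> {} \<Longrightarrow> card (res_h (tents t) h) = quota K h"
    and "r \<in> res_h (tents t) h \<Longrightarrow> r' \<in> res_h (rejs t) h \<Longrightarrow> r \<in> set (takeWhile (\<lambda>x. x \<noteq> r') (hlist K h))"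
proof -
  define S where "S = res_h (props t) h"
  define xs where "xs = hlist K h"
  define q where "q = quota K h"
  have ft: "feasible K t" using mx by (simp add: maximal_feasible_def)
  have it: "inv K t" using feasible_inv[OF ft] .
  have fS: "finite S" using sub finite_subset unfolding S_def by blast
  have sx: "set xs \<inter> S = S" using sub unfolding S_def xs_def by blast
  have TS: "res_h (tents t) h \<subseteq> S" unfolding S_def by (auto simp: res_h_def tents_def)
  have notO: "\<not> ousted K (props t) r h" if "r \<in> res_h (tents t) h" for r
    using max_rej[OF mx] that by (auto simp: res_h_def tents_def)
  have rejO: "ousted K (props t) r h" if "r \<in> res_h (rejs t) h" for r
    using it that by (auto simp: inv_def res_h_def)
  have rejq: "q \<le> card S" if "r \<in> res_h (rejs t) h" for r
    using rejO[OF that] sx unfolding ousted_def S_def xs_def q_def by simp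
  have A: "res_h (tents t) h = {r\<in>S. card (set (takeWhile (\<lambda>x. x \<noteq> r) xs) \<inter> S) < q}"
    if qS: "q \<le> card S"
  proof
    show "res_h (tents t) h \<subseteq> {r\<in>S. card (set (takeWhile (\<lambda>x. x \<noteq> r) xs) \<inter> S) < q}"
    proof
      fix r assume r: "r \<in> res_h (tents t) h"
      have "r \<in> S" using r TS by blast
      moreover have "r \<in> set xs" using \<open>r \<in> S\<close> sx by blast
      moreover have "(r,h) \<in> props t" using r by (auto simp: res_h_def tents_def)
      ultimately show "r \<in> {r\<in>S. card (set (takeWhile (\<lambda>x. x \<noteq> r) xs) \<inter> S) < q}"
        using notO[OF r] qS sx unfolding ousted_def S_def xs_def q_def by auto
    qed
  next
    show "{r\<in>S. card (set (takeWhile (\<lambda>x. x \<noteq> r) xs) \<inter> S) < q} \<subseteq> res_h (tents t) h"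
    proof
      fix r assume r: "r \<in> {r\<in>S. card (set (takeWhile (\<lambda>x. x \<noteq> r) xs) \<inter> S) < q}"
      have "r \<in> set xs" using r sx by blast
      have "(r,h) \<notin> rejs t"
      proof
        assume "(r,h) \<in> rejs t"
        then have "ousted K (props t) r h" using rejO by (auto simp: res_h_def)
        then show False using r \<open>r \<in> set xs\<close> unfolding ousted_def S_def xs_def q_def by auto
      qed
      then show "r \<in> res_h (tents t) h" using r unfolding S_def by (auto simp: res_h_def tents_def)
    qed
  qed
  have cq: "card (res_h (tents t) h) = q" if "q \<le> card S"
    using A[OF that] card_first_q[OF d[folded xs_def] sub[folded S_def xs_def] that] by simp
  show "card (res_h (tents t) h) \<le> quota K h"
  proof (cases "q \<le> card S")
    case True then show ?thesis using cq q_def by simp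
  next
    case False
    then show ?thesis using card_mono[OF fS TS] q_def by simp
  qed
  show "res_h (rejs t) h \<noteq> {} \<Longrightarrow> card (res_h (tents t) h) = quota K h"
    using rejq cq q_def by blast
  assume r: "r \<in> res_h (tents t) h" and r': "r' \<in> res_h (rejs t) h"
  have qS: "q \<le> card S" using rejq[OF r'] .
  have r'x: "r' \<in> set xs" using r' sx unfolding S_def using it
    by (auto simp: inv_def res_h_def)
  have o': "q \<le> card (set (takeWhile (\<lambda>x. x \<noteq> r') xs) \<inter> S)"
    using rejO[OF r'] r'x unfolding ousted_def S_def xs_def q_def by simp
  have o: "card (set (takeWhile (\<lambda>x. x \<noteq> r) xs) \<inter> S) < q"
    using r A[OF qS] by blast
  show "r \<in> set (takeWhile (\<lambda>x. x \<noteq> r') (hlist K h))"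
  proof (rule ccontr)
    assume "r \<notin> set (takeWhile (\<lambda>x. x \<noteq> r') (hlist K h))"
    then have "set (takeWhile (\<lambda>x. x \<noteq> r') xs) \<inter> S \<subseteq> set (takeWhile (\<lambda>x. x \<noteq> r) xs) \<inter> S"
      unfolding xs_def by (intro Int_mono tw_sub subset_refl)
    then have "card (set (takeWhile (\<lambda>x. x \<noteq> r') xs) \<inter> S) \<le> card (set (takeWhile (\<lambda>x. x \<noteq> r) xs) \<inter> S)"
      by (rule card_mono[rotated]) simp
    then show False using o o' by simp
  qed
qed

lemma prefix_precedes:
  assumes "prefix ys xs" "a \<in> set ys" "b \<in> set xs" "b \<notin> set ys"
  shows "precedes xs a b"
proof -
  obtain zs where xs: "xs = ys @ zs" using assms(1) by (auto simp: prefix_def)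
  obtain i where i: "i < length ys" "ys ! i = a" using assms(2) by (auto simp: in_set_conv_nth)
  obtain j where j: "j < length xs" "xs ! j = b" using assms(3) by (auto simp: in_set_conv_nth)
  have "\<not> j < length ys"
  proof
    assume "j < length ys"
    then have "ys ! j = b" using j xs by (simp add: nth_append)
    then show False using assms(4) \<open>j < length ys\<close> by (metis nth_mem)
  qed
  moreover have "xs ! i = a" using i xs by (simp add: nth_append)
  ultimately have "i < j" using i(1) by simp
  then show ?thesis unfolding precedes_def using i j \<open>xs ! i = a\<close> by blast
qed

theorem proposition6:
  fixes I J :: "('r,'h) inst"
  assumes "wf_inst I" and "wf_inst J"
    and "resident_minimal I" and "hospital_complete I"
    and "simple_extension J I"
  defines "P \<equiv> propI J - propI I"
    and "X \<equiv> rejI J - rejI I"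
  shows "P \<inter> propI I = {}
    \<and> (\<forall>r\<in>Res I. \<forall>h\<in>Hos I. \<forall>h'\<in>Hos I. (r,h) \<in> P \<and> (r,h') \<in> P \<longrightarrow> h = h')
    \<and> X \<subseteq> tentI I
    \<and> res P \<inter> res (tentI I) \<subseteq> res X
    \<and> (\<forall>h\<in>Hos I. card (res_h (P \<union> (tentI I - X)) h) \<le> quota I h
            \<and> (res_h X h \<noteq> {} \<longrightarrow> card (res_h (P \<union> (tentI I - X)) h) = quota I h))
    \<and> (\<forall>h\<in>Hos I. \<forall>r\<in>res_h (P \<union> (tentI I - X)) h. \<forall>r'\<in>res_h X h.
            precedes (hlist I h) r r')"
proof -
  define sI where "sI = (SOME s. maximal_feasible I s)"
  define tJ where "tJ = (SOME s. maximal_feasible J s)"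
  have mI: "maximal_feasible I sI" unfolding sI_def
    using max_some assms(1) by (auto simp: wf_inst_def)
  have mJ: "maximal_feasible J tJ" unfolding tJ_def
    using max_some assms(2) by (auto simp: wf_inst_def)
  have pI: "propI I = props sI" "rejI I = rejs sI" "tentI I = tents sI"
    by (simp_all add: propI_def rejI_def tentI_def sI_def)
  have pJ: "propI J = props tJ" "rejI J = rejs tJ" "tentI J = tents tJ"
    by (simp_all add: propI_def rejI_def tentI_def tJ_def)
  have ext: "is_extension J I" using assms(5) by (simp add: simple_extension_def)
  have PX: "P \<inter> X = {}" using assms(5) by (simp add: simple_extension_def P_def X_def)
  have exts: "Res J = Res I" "Hos J = Hos I" "quota J = quota I"
    "\<And>r. r \<in> Res I \<Longrightarrow> prefix (rlist I r) (rlist J r)"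
    "\<And>h. h \<in> Hos I \<Longrightarrow> prefix (hlist I h) (hlist J h)"
    using ext by (auto simp: is_extension_def)
  have fsI: "feasible I sI" using mI by (simp add: maximal_feasible_def)
  have ftJ: "feasible J tJ" using mJ by (simp add: maximal_feasible_def)
  have iI: "inv I sI" using feasible_inv[OF fsI] .
  have iJ: "inv J tJ" using feasible_inv[OF ftJ] .
  have dom: "props sI \<subseteq> props tJ" "rejs sI \<subseteq> rejs tJ"
    using dominate[OF feasible_ext[OF fsI ext assms(2)] mJ] by auto
  have RM: "props sI = {(r,h). r \<in> Res I \<and> h \<in> set (rlist I r)}"
    using assms(3) pI by (simp add: resident_minimal_def)
  have rpI: "rejs sI \<subseteq> props sI" and rpJ: "rejs tJ \<subseteq> props tJ"
    using iI iJ by (auto simp: inv_def)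
  have Pd: "P = props tJ - props sI" and Xd: "X = rejs tJ - rejs sI"
    by (simp_all add: P_def X_def pI pJ)
  have propJ: "\<And>r h. (r,h) \<in> props tJ \<Longrightarrow> r \<in> Res I \<and> h \<in> Hos I \<and> h \<in> set (rlist J r)
         \<and> (\<forall>h'. precedes (rlist J r) h' h \<longrightarrow> (r,h') \<in> rejs tJ)"
    using iJ exts(1,2) by (auto simp: inv_def)
  have P1: "P \<inter> propI I = {}" unfolding P_def by blast
  have P2: "\<forall>r\<in>Res I. \<forall>h\<in>Hos I. \<forall>h'\<in>Hos I. (r,h) \<in> P \<and> (r,h') \<in> P \<longrightarrow> h = h'"
  proof (intro ballI impI)
    fix r h h' assume "r \<in> Res I" "h \<in> Hos I" "h' \<in> Hos I" and hh: "(r,h) \<in> P \<and> (r,h') \<in> P"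
    have key: False if a: "(r,a) \<in> P" "(r,b) \<in> P" "precedes (rlist J r) a b" for a b
    proof -
      have "(r,a) \<in> rejs tJ" using propJ[of r b] a Pd by auto
      moreover have "(r,a) \<notin> rejs sI" using a(1) rpI Pd by auto
      ultimately have "(r,a) \<in> X" using Xd by simp
      then show False using PX a(1) by auto
    qed
    show "h = h'"
    proof (rule ccontr)
      assume "h \<noteq> h'"
      moreover have "h \<in> set (rlist J r)" "h' \<in> set (rlist J r)" using propJ hh Pd by auto
      ultimately have "precedes (rlist J r) h h' \<or> precedes (rlist J r) h' h"
        using precedes_total by metis
      then show False using key hh by blast
    qed
  qed
  have P3: "X \<subseteq> tentI I"
  proof
    fix x assume x: "x \<in> X"
    obtain r h where rh: "x = (r,h)" by (cases x)
    have "x \<in> props tJ" using x Xd rpJ by auto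
    moreover have "x \<notin> P" using x PX by auto
    ultimately have "x \<in> props sI" using Pd by auto
    then show "x \<in> tentI I" using x Xd pI by (simp add: tents_def)
  qed
  have P4: "res P \<inter> res (tentI I) \<subseteq> res X"
  proof
    fix r assume "r \<in> res P \<inter> res (tentI I)"
    then obtain h h' where h: "(r,h) \<in> P" and h': "(r,h') \<in> tents sI"
      by (auto simp: res_def pI)
    have r: "r \<in> Res I" "h \<in> set (rlist J r)" using propJ h Pd by auto
    have "h \<notin> set (rlist I r)" using h Pd RM r by auto
    moreover have "h' \<in> set (rlist I r)" using h' RM by (auto simp: tents_def)
    ultimately have "precedes (rlist J r) h' h"
      using prefix_precedes[OF exts(4)[OF r(1)]] r by blast
    then have "(r,h') \<in> rejs tJ" using propJ h Pd by auto
    moreover have "(r,h') \<notin> rejs sI" using h' by (simp add: tents_def)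
    ultimately have "(r,h') \<in> X" using Xd by simp
    then show "r \<in> res X" by (auto simp: res_def)
  qed
  have TJ: "P \<union> (tentI I - X) = tents tJ"
    using dom rpI PX unfolding Pd Xd pI tents_def by blast
  have HH: "(\<forall>h\<in>Hos I. card (res_h (P \<union> (tentI I - X)) h) \<le> quota I h
            \<and> (res_h X h \<noteq> {} \<longrightarrow> card (res_h (P \<union> (tentI I - X)) h) = quota I h))
    \<and> (\<forall>h\<in>Hos I. \<forall>r\<in>res_h (P \<union> (tentI I - X)) h. \<forall>r'\<in>res_h X h.
            precedes (hlist I h) r r')"
  proof (rule conjI; intro ballI)
    fix h assume h: "h \<in> Hos I"
    have d: "distinct (hlist J h)" using assms(2) h exts(2) by (auto simp: wf_inst_def)
    have cI: "set (hlist I h) = Res I" using assms(4) h by (simp add: hospital_complete_def)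
    have sJ: "set (hlist I h) \<subseteq> set (hlist J h)" using exts(5)[OF h] set_mono_prefix by blast
    have sub: "res_h (props tJ) h \<subseteq> set (hlist J h)"
      using propJ cI sJ by (auto simp: res_h_def)
    note hf = hosp_facts[OF mJ d sub]
    have XR: "res_h X h \<subseteq> res_h (rejs tJ) h" using Xd by (auto simp: res_h_def)
    show "card (res_h (P \<union> (tentI I - X)) h) \<le> quota I h
            \<and> (res_h X h \<noteq> {} \<longrightarrow> card (res_h (P \<union> (tentI I - X)) h) = quota I h)"
      using hf(1,2) XR exts(3) unfolding TJ by auto
  next
    fix h r r' assume h: "h \<in> Hos I"
      and r: "r \<in> res_h (P \<union> (tentI I - X)) h" and r': "r' \<in> res_h X h"
    have d: "distinct (hlist J h)" using assms(2) h exts(2) by (auto simp: wf_inst_def)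
    have cI: "set (hlist I h) = Res I" using assms(4) h by (simp add: hospital_complete_def)
    have sJ: "set (hlist I h) \<subseteq> set (hlist J h)" using exts(5)[OF h] set_mono_prefix by blast
    have sub: "res_h (props tJ) h \<subseteq> set (hlist J h)"
      using propJ cI sJ by (auto simp: res_h_def)
    note hf = hosp_facts[OF mJ d sub]
    have XR: "res_h X h \<subseteq> res_h (rejs tJ) h" using Xd by (auto simp: res_h_def)
    have rr': "r' \<in> res_h (rejs tJ) h" using r' XR by blast
    have tw: "r \<in> set (takeWhile (\<lambda>x. x \<noteq> r') (hlist J h))"
      using hf(3)[OF r[unfolded TJ] rr'] .
    have "r' \<in> Res I" using rr' rpJ propJ by (auto simp: res_h_def)
    then have r'I: "r' \<in> set (hlist I h)" using cI by simp
    obtain zs where zs: "hlist J h = hlist I h @ zs" using exts(5)[OF h] by (auto simp: prefix_def)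
    have "takeWhile (\<lambda>x. x \<noteq> r') (hlist J h) = takeWhile (\<lambda>x. x \<noteq> r') (hlist I h)"
      unfolding zs by (rule takeWhile_append1[OF r'I]) simp
    then show "precedes (hlist I h) r r'" using tw tw_precedes r'I by metis
  qed
  show ?thesis using P1 P2 P3 P4 HH by blast
qed

end
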